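(* Let $\mathcal L$ be a linearly ordered non-discrete MV-algebra. Let $\mathcal F_1\subseteq\mathcal F_2\subseteq\mathcal G$ be filters (in the sense below) with $|\mathcal F_2\setminus\mathcal F_1|\ge 2$. Then $$\mathcal F_1\sqsubseteq\!\!\to\mathcal G\neq\mathcal F_2\sqsubseteq\!\!\to\mathcal G.$$
   Context: $\mathcal L=(L,\oplus,\lnot,0)$ is a linearly ordered MV-algebra. We write $1=\lnot0$, $x\otimes y=\lnot(\lnot x\oplus\lnot y)$, and $x\to y=\lnot x\oplus y$. Non-discrete means no element has an immediate successor or an immediate predecessor. In this setting a "filter" means a nonempty proper upward-closed subset $\mathcal F$ of $L$ whose kernel $\mathcal K(\mathcal F)=\{z:\forall a\notin\mathcal F,\ z\to a\notin\mathcal F\}$ equals $\{1\}$. For a filter $\mathcal F$ and $a\in L$, let $\mathcal F_a=\{z: z\to a\notin\mathcal F\}$. For $\mathcal F\subseteq\mathcal G$ we put $\mathcal F\sqsubseteq\!\!\to\mathcal G=\bigcap_{a\in L\setminus\mathcal G}\mathcal F_a$. *)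

theory Defs
  imports Main
begin

definition mv_algebra :: "'a set \<Rightarrow> ('a \<Rightarrow> 'a \<Rightarrow> 'a) \<Rightarrow> ('a \<Rightarrow> 'a) \<Rightarrow> 'a \<Rightarrow> bool" where
  "mv_algebra L oplus neg zero \<longleftrightarrow>
     zero \<in> L \<and>
     (\<forall>x\<in>L. \<forall>y\<in>L. oplus x y \<in> L) \<and>
     (\<forall>x\<in>L. neg x \<in> L) \<and>
     (\<forall>x\<in>L. \<forall>y\<in>L. \<forall>z\<in>L. oplus x (oplus y z) = oplus (oplus x y) z) \<and>
     (\<forall>x\<in>L. \<forall>y\<in>L. oplus x y = oplus y x) \<and>
     (\<forall>x\<in>L. oplus x zero = x) \<and>
     (\<forall>x\<in>L. neg (neg x) = x) \<and>
     (\<forall>x\<in>L. oplus x (neg zero) = neg zero) \<and>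
     (\<forall>x\<in>L. \<forall>y\<in>L. oplus (neg (oplus (neg x) y)) y = oplus (neg (oplus (neg y) x)) x)"

definition mv_one :: "('a \<Rightarrow> 'a) \<Rightarrow> 'a \<Rightarrow> 'a" where
  "mv_one neg zero = neg zero"

definition mv_imp :: "('a \<Rightarrow> 'a \<Rightarrow> 'a) \<Rightarrow> ('a \<Rightarrow> 'a) \<Rightarrow> 'a \<Rightarrow> 'a \<Rightarrow> 'a" where
  "mv_imp oplus neg x y = oplus (neg x) y"

definition mv_le :: "('a \<Rightarrow> 'a \<Rightarrow> 'a) \<Rightarrow> ('a \<Rightarrow> 'a) \<Rightarrow> 'a \<Rightarrow> 'a \<Rightarrow> 'a \<Rightarrow> bool" where
  "mv_le oplus neg zero x y \<longleftrightarrow> mv_imp oplus neg x y = mv_one neg zero"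

definition mv_less :: "('a \<Rightarrow> 'a \<Rightarrow> 'a) \<Rightarrow> ('a \<Rightarrow> 'a) \<Rightarrow> 'a \<Rightarrow> 'a \<Rightarrow> 'a \<Rightarrow> bool" where
  "mv_less oplus neg zero x y \<longleftrightarrow> mv_le oplus neg zero x y \<and> x \<noteq> y"

definition linear_mv_algebra :: "'a set \<Rightarrow> ('a \<Rightarrow> 'a \<Rightarrow> 'a) \<Rightarrow> ('a \<Rightarrow> 'a) \<Rightarrow> 'a \<Rightarrow> bool" where
  "linear_mv_algebra L oplus neg zero \<longleftrightarrow>
     mv_algebra L oplus neg zero \<and>
     (\<forall>x\<in>L. \<forall>y\<in>L. mv_le oplus neg zero x y \<or> mv_le oplus neg zero y x)"

definition non_discrete :: "'a set \<Rightarrow> ('a \<Rightarrow> 'a \<Rightarrow> 'a) \<Rightarrow> ('a \<Rightarrow> 'a) \<Rightarrow> 'a \<Rightarrow> bool" where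
  "non_discrete L oplus neg zero \<longleftrightarrow>
     (\<forall>a\<in>L. \<not> (\<exists>b\<in>L. mv_less oplus neg zero a b \<and>
                  \<not> (\<exists>c\<in>L. mv_less oplus neg zero a c \<and> mv_less oplus neg zero c b))) \<and>
     (\<forall>a\<in>L. \<not> (\<exists>b\<in>L. mv_less oplus neg zero b a \<and>
                  \<not> (\<exists>c\<in>L. mv_less oplus neg zero b c \<and> mv_less oplus neg zero c a)))"

definition mv_kernel :: "'a set \<Rightarrow> ('a \<Rightarrow> 'a \<Rightarrow> 'a) \<Rightarrow> ('a \<Rightarrow> 'a) \<Rightarrow> 'a set \<Rightarrow> 'a set" where
  "mv_kernel L oplus neg F = {z \<in> L. \<forall>a\<in>L - F. mv_imp oplus neg z a \<notin> F}"

definition mv_filter :: "'a set \<Rightarrow> ('a \<Rightarrow> 'a \<Rightarrow> 'a) \<Rightarrow> ('a \<Rightarrow> 'a) \<Rightarrow> 'a \<Rightarrow> 'a set \<Rightarrow> bool" where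
  "mv_filter L oplus neg zero F \<longleftrightarrow>
     F \<subseteq> L \<and> F \<noteq> {} \<and> F \<noteq> L \<and>
     (\<forall>x\<in>F. \<forall>y\<in>L. mv_le oplus neg zero x y \<longrightarrow> y \<in> F) \<and>
     mv_kernel L oplus neg F = {mv_one neg zero}"

definition filter_sub :: "'a set \<Rightarrow> ('a \<Rightarrow> 'a \<Rightarrow> 'a) \<Rightarrow> ('a \<Rightarrow> 'a) \<Rightarrow> 'a set \<Rightarrow> 'a \<Rightarrow> 'a set" where
  "filter_sub L oplus neg F a = {z \<in> L. mv_imp oplus neg z a \<notin> F}"

text \<open>F \<sqsubseteq>\<rightarrow> G = \<Inter>_{a \<in> L \ G} F_a (within L).\<close>
definition filter_arrow :: "'a set \<Rightarrow> ('a \<Rightarrow> 'a \<Rightarrow> 'a) \<Rightarrow> ('a \<Rightarrow> 'a) \<Rightarrow> 'a set \<Rightarrow> 'a set \<Rightarrow> 'a set" where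
  "filter_arrow L oplus neg F G = {z \<in> L. \<forall>a\<in>L - G. z \<in> filter_sub L oplus neg F a}"

end

theory Submission
  imports Defs
begin

lemma mv_basic:
  assumes "mv_algebra L oplus neg zero"
  shows "zero \<in> L" "\<And>x y. x\<in>L \<Longrightarrow> y\<in>L \<Longrightarrow> oplus x y \<in> L"
    "\<And>x. x\<in>L \<Longrightarrow> neg x \<in> L"
    "\<And>x y z. x\<in>L \<Longrightarrow> y\<in>L \<Longrightarrow> z\<in>L \<Longrightarrow> oplus x (oplus y z) = oplus (oplus x y) z"
    "\<And>x y. x\<in>L \<Longrightarrow> y\<in>L \<Longrightarrow> oplus x y = oplus y x"
    "\<And>x. x\<in>L \<Longrightarrow> oplus x zero = x"
    "\<And>x. x\<in>L \<Longrightarrow> neg (neg x) = x"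
    "\<And>x. x\<in>L \<Longrightarrow> oplus x (neg zero) = neg zero"
    "\<And>x y. x\<in>L \<Longrightarrow> y\<in>L \<Longrightarrow> oplus (neg (oplus (neg x) y)) y = oplus (neg (oplus (neg y) x)) x"
  using assms unfolding mv_algebra_def by blast+

lemma mv_derived:
  assumes mv: "mv_algebra L oplus neg zero"
  shows "\<And>x. x\<in>L \<Longrightarrow> oplus zero x = x"
    "\<And>y. y\<in>L \<Longrightarrow> oplus (neg y) y = neg zero"
    "\<And>x. x\<in>L \<Longrightarrow> oplus (neg zero) x = neg zero"
    "\<And>x y. x\<in>L \<Longrightarrow> y\<in>L \<Longrightarrow> oplus (neg x) y = neg zero \<Longrightarrow> oplus (neg (oplus (neg y) x)) x = y"
proof -
  note b = mv_basic[OF mv]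
  show z: "\<And>x. x\<in>L \<Longrightarrow> oplus zero x = x" using b(5)[OF b(1)] b(6) by simp
  show "\<And>y. y\<in>L \<Longrightarrow> oplus (neg y) y = neg zero"
  proof -
    fix y assume y: "y \<in> L"
    have "oplus (neg (oplus (neg (neg zero)) y)) y = oplus (neg (oplus (neg y) (neg zero))) (neg zero)"
      using b(9)[OF b(3)[OF b(1)] y] .
    moreover have "neg (neg zero) = zero" using b(7)[OF b(1)] .
    moreover have "oplus (neg y) (neg zero) = neg zero" using b(8)[OF b(3)[OF y]] .
    ultimately show "oplus (neg y) y = neg zero" using z[OF y] b(8)[OF b(1)] by simp
  qed
  show "\<And>x. x\<in>L \<Longrightarrow> oplus (neg zero) x = neg zero" using b(5)[OF b(3)[OF b(1)]] b(8) by simp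
  show "\<And>x y. x\<in>L \<Longrightarrow> y\<in>L \<Longrightarrow> oplus (neg x) y = neg zero \<Longrightarrow> oplus (neg (oplus (neg y) x)) x = y"
  proof -
    fix x y assume xy: "x\<in>L" "y\<in>L" "oplus (neg x) y = neg zero"
    have "oplus (neg (oplus (neg x) y)) y = oplus (neg (oplus (neg y) x)) x" using b(9)[OF xy(1,2)] .
    then show "oplus (neg (oplus (neg y) x)) x = y" using xy(3) b(7)[OF b(1)] z[OF xy(2)] by simp
  qed
qed

lemma mv_mono:
  assumes mv: "mv_algebra L oplus neg zero" and abc: "a\<in>L" "b\<in>L" "c\<in>L"
    and le: "oplus (neg a) b = neg zero"
  shows "oplus (neg (oplus c a)) (oplus c b) = neg zero"
proof -
  note b = mv_basic[OF mv] and d = mv_derived[OF mv]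
  define t where "t = neg (oplus (neg b) a)"
  have t: "t \<in> L" using b(2,3) abc unfolding t_def by auto
  have bt: "b = oplus t a" using d(4)[OF abc(1,2) le] unfolding t_def by simp
  have "oplus c b = oplus c (oplus a t)" using b(5)[OF t abc(1)] bt by simp
  also have "\<dots> = oplus (oplus c a) t" using b(4)[OF abc(3) abc(1) t] .
  finally have cb: "oplus c b = oplus (oplus c a) t" .
  have caL: "oplus c a \<in> L" using b(2) abc by auto
  have "oplus (neg (oplus c a)) (oplus c b) = oplus (oplus (neg (oplus c a)) (oplus c a)) t"
    using b(4)[OF b(3)[OF caL] caL t] cb by simp
  also have "\<dots> = neg zero" using d(2)[OF caL] d(3)[OF t] by simp
  finally show ?thesis .
qed

lemma core:
  assumes mv: "mv_algebra L oplus neg zero"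
    and lin: "\<forall>x\<in>L. \<forall>y\<in>L. mv_le oplus neg zero x y \<or> mv_le oplus neg zero y x"
    and F1: "mv_filter L oplus neg zero F1"
    and G: "mv_filter L oplus neg zero G"
    and sub: "F2 \<subseteq> G"
    and x: "x \<in> F2 - F1" and y: "y \<in> F2 - F1" and xy: "x \<noteq> y"
    and lexy: "mv_le oplus neg zero x y"
  shows "filter_arrow L oplus neg F1 G \<noteq> filter_arrow L oplus neg F2 G"
proof -
  note b = mv_basic[OF mv] and d = mv_derived[OF mv]
  have GL: "G \<subseteq> L" and Gup: "\<forall>u\<in>G. \<forall>v\<in>L. mv_le oplus neg zero u v \<longrightarrow> v \<in> G"
    and Gk: "mv_kernel L oplus neg G = {neg zero}"
    using G unfolding mv_filter_def mv_one_def by auto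
  have F1up: "\<forall>u\<in>F1. \<forall>v\<in>L. mv_le oplus neg zero u v \<longrightarrow> v \<in> F1"
    using F1 unfolding mv_filter_def by auto
  have xL: "x \<in> L" and yL: "y \<in> L" using x y sub GL by auto
  have xG: "x \<in> G" using x sub by auto
  have le1: "oplus (neg x) y = neg zero" using lexy unfolding mv_le_def mv_imp_def mv_one_def .
  define e where "e = neg (oplus (neg y) x)"
  have eL: "e \<in> L" using b(2,3) xL yL unfolding e_def by auto
  have ne: "neg e = oplus (neg y) x" using b(7)[OF b(2)[OF b(3)[OF yL] xL]] unfolding e_def .
  have "neg e \<noteq> neg zero"
  proof
    assume "neg e = neg zero"
    then have le2: "oplus (neg y) x = neg zero" using ne by simp
    have "y = x" using d(4)[OF xL yL le1] d(4)[OF yL xL le2] le1 le2 b(7)[OF b(1)] d(1)[OF xL] d(1)[OF yL] by simp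
    then show False using xy by simp
  qed
  then have "neg e \<notin> mv_kernel L oplus neg G" using Gk by auto
  then obtain dd where dd: "dd \<in> L - G" and ed: "oplus e dd \<in> G"
    using b(7)[OF eL] b(3)[OF eL] unfolding mv_kernel_def mv_imp_def by auto
  have ddL: "dd \<in> L" using dd by auto
  have "\<not> mv_le oplus neg zero x dd" using Gup xG dd by auto
  then have ledx: "oplus (neg dd) x = neg zero" using lin xL ddL
    unfolding mv_le_def mv_imp_def mv_one_def by blast
  define z where "z = oplus (neg x) dd"
  have zL: "z \<in> L" using b(2,3) xL ddL unfolding z_def by auto
  have zd: "oplus (neg z) dd = x" using d(4)[OF ddL xL ledx] unfolding z_def .
  have notin2: "z \<notin> filter_arrow L oplus neg F2 G"
    using dd zd x unfolding filter_arrow_def filter_sub_def mv_imp_def by auto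
  have xe: "oplus x e = y"
    using d(4)[OF xL yL le1] b(5)[OF xL eL] unfolding e_def by simp
  have in1: "\<forall>a\<in>L - G. oplus (neg z) a \<notin> F1"
  proof
    fix a assume a: "a \<in> L - G"
    have aL: "a \<in> L" using a by auto
    have deL: "oplus dd e \<in> L" using b(2) ddL eL by auto
    have "oplus dd e \<in> G" using ed b(5)[OF ddL eL] by simp
    then have "\<not> mv_le oplus neg zero (oplus dd e) a" using Gup a by auto
    then have lea: "oplus (neg a) (oplus dd e) = neg zero" using lin aL deL
      unfolding mv_le_def mv_imp_def mv_one_def by blast
    have m: "oplus (neg (oplus (neg z) a)) (oplus (neg z) (oplus dd e)) = neg zero"
      using mv_mono[OF mv aL deL b(3)[OF zL] lea] .
    have "oplus (neg z) (oplus dd e) = y" using b(4)[OF b(3)[OF zL] ddL eL] zd xe by simp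
    with m have "mv_le oplus neg zero (oplus (neg z) a) y"
      unfolding mv_le_def mv_imp_def mv_one_def by simp
    then have "oplus (neg z) a \<notin> F1" using F1up y yL by auto
    then show "oplus (neg z) a \<notin> F1" .
  qed
  then have "z \<in> filter_arrow L oplus neg F1 G"
    using zL unfolding filter_arrow_def filter_sub_def mv_imp_def by blast
  then show ?thesis using notin2 by blast
qed

theorem mainTheorem13:
  fixes L :: "'a set" and oplus :: "'a \<Rightarrow> 'a \<Rightarrow> 'a" and neg :: "'a \<Rightarrow> 'a" and zero :: 'a
    and F1 F2 G :: "'a set"
  assumes "linear_mv_algebra L oplus neg zero"
    and "non_discrete L oplus neg zero"
    and "mv_filter L oplus neg zero F1"
    and "mv_filter L oplus neg zero F2"
    and "mv_filter L oplus neg zero G"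
    and "F1 \<subseteq> F2" and "F2 \<subseteq> G"
    and "\<exists>x y. x \<in> F2 - F1 \<and> y \<in> F2 - F1 \<and> x \<noteq> y"
  shows "filter_arrow L oplus neg F1 G \<noteq> filter_arrow L oplus neg F2 G"
proof -
  have mv: "mv_algebra L oplus neg zero"
    and lin: "\<forall>x\<in>L. \<forall>y\<in>L. mv_le oplus neg zero x y \<or> mv_le oplus neg zero y x"
    using assms(1) unfolding linear_mv_algebra_def by auto
  obtain x y where xy: "x \<in> F2 - F1" "y \<in> F2 - F1" "x \<noteq> y" using assms(8) by blast
  have GL: "G \<subseteq> L" using assms(5) unfolding mv_filter_def by blast
  have "x \<in> L" "y \<in> L" using xy assms(7) GL by auto
  then have "mv_le oplus neg zero x y \<or> mv_le oplus neg zero y x" using lin by auto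
  then show ?thesis
  proof
    assume "mv_le oplus neg zero x y"
    then show ?thesis by (rule core[OF mv lin assms(3) assms(5) assms(7) xy])
  next
    assume "mv_le oplus neg zero y x"
    then show ?thesis by (rule core[OF mv lin assms(3) assms(5) assms(7) xy(2) xy(1) not_sym[OF xy(3)]])
  qed
qed

end
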